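(* In the Standing Setup with $R=-v(X-w)$ ($v,w\in\mathbb F$), for every $h\in\mathbb Z$: $$d_{h-2}d_{h-1}^2d_h^3d_{h+1}^2d_{h+2}=-v^3\bigl((g+d_he_h)+w(f+d_h)+w^3\bigr)=v^2\,d_{h-1}d_h^2d_{h+1}-v^3\,(g+wf+w^3).$$
   Context: Standing Setup. $\mathbb F$ is a field of characteristic not $2$ or $3$; $f,g\in\mathbb F$; $A=X^3+fX+g\in\mathbb F[X]$; $R\in\mathbb F[X]$ is a polynomial of degree at most $2$; $D=A^2+4R$; $Y$ satisfies $Y^2=D(X)$, $Z=\tfrac12(Y+A)$ and $\overline Z=\tfrac12(-Y+A)$, so $Z+\overline Z=A$ and $Z\overline Z=-R$. We are given sequences $(u_h),(v_h),(w_h),(d_h),(e_h)$ of elements of $\mathbb F$ indexed by $h\in\mathbb Z$, with all $u_h\neq0$, such that for every $h\in\mathbb Z$ the following two identities hold in $\mathbb F[X]$: (i) $A+d_h(X+e_h)+d_{h+1}(X+e_{h+1})=(X+v_h)(X^2-v_hX+w_h)$; (ii) $-u_hu_{h+1}(X^2-v_hX+w_h)(X^2-v_{h+1}X+w_{h+1})=d_{h+1}^2(X+e_{h+1})^2+d_{h+1}(X+e_{h+1})A-R$. (These say that $Z_h=\bigl(Z+d_h(X+e_h)\bigr)/\bigl(u_h(X^2-v_hX+w_h)\bigr)$ are consecutive complete quotients of a continued fraction expansion with partial quotients $(X+v_h)/u_h$.) *)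

theory Defs
  imports "HOL-Computational_Algebra.Polynomial"
begin

definition cubicA :: "'a::comm_ring_1 \<Rightarrow> 'a \<Rightarrow> 'a poly" where
  "cubicA f g = [:g, f, 0, 1:]"

end

theory Submission
  imports Defs
begin

lemma lc_aux:
  fixes a b c :: "'a::comm_ring"
  shows "a - b = c \<Longrightarrow> c = 0 \<Longrightarrow> a = b" by simp

lemma zero_diff: fixes a b :: "'a::comm_ring" shows "a = b \<Longrightarrow> a - b = 0" by simp

theorem mainTheorem9:
  fixes f g v w :: "'a::field"
    and u vv ww d e :: "int \<Rightarrow> 'a"
    and R :: "'a poly"
  assumes char2: "(2::'a) \<noteq> 0"
    and char3: "(3::'a) \<noteq> 0"
    and R_def: "R = - smult v [:- w, 1:]"
    and u_nz: "\<And>h. u h \<noteq> 0"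
    and iden_i: "\<And>h. cubicA f g + smult (d h) [:e h, 1:] + smult (d (h+1)) [:e (h+1), 1:]
                 = [:vv h, 1:] * [:ww h, - vv h, 1:]"
    and iden_ii: "\<And>h. - smult (u h * u (h+1)) ([:ww h, - vv h, 1:] * [:ww (h+1), - vv (h+1), 1:])
                 = smult ((d (h+1))\<^sup>2) ([:e (h+1), 1:]\<^sup>2) + smult (d (h+1)) [:e (h+1), 1:] * cubicA f g - R"
  shows "d (h-2) * (d (h-1))\<^sup>2 * (d h)^3 * (d (h+1))\<^sup>2 * d (h+2)
           = - (v^3) * ((g + d h * e h) + w * (f + d h) + w^3)
       \<and> - (v^3) * ((g + d h * e h) + w * (f + d h) + w^3)
           = v\<^sup>2 * d (h-1) * (d h)\<^sup>2 * d (h+1) - v^3 * (g + w * f + w^3)"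
proof -
  have co: "g + d k * e k + d (k+1) * e (k+1) = vv k * ww k
     \<and> f + d k + d (k+1) + vv k * vv k = ww k
     \<and> v * w = g * (d (k+1) * e (k+1)) - d (k+1) * ww k * ww (k+1) + d (k+1) * d (k+1) * e (k+1) * e (k+1)
     \<and> - d (k+1) * (vv k * ww (k+1) + ww k * vv (k+1)) = v + g * d (k+1) + f * d (k+1) * e (k+1) + 2 * d (k+1) * d (k+1) * e (k+1)
     \<and> d (k+1) * ww k = f * d (k+1) + d (k+1) * d (k+1) - d (k+1) * ww (k+1) - d (k+1) * vv k * vv (k+1)
     \<and> - d (k+1) * (vv k + vv (k+1)) = d (k+1) * e (k+1)
     \<and> d (k+1) \<noteq> 0" for k
  proof -
    have A: "g + (d k * e k + d (1 + k) * e (1 + k)) = vv k * ww k \<and>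
      f + (d k + (d (1 + k) + vv k * vv k)) = ww k"
      using iden_i[of k] by (simp add: cubicA_def power2_eq_square algebra_simps)
    have B: "v * w =
      g * (d (1 + k) * e (1 + k)) +
      (u k * (ww k * (u (1 + k) * ww (1 + k))) +
       d (1 + k) * (d (1 + k) * (e (1 + k) * e (1 + k)))) \<and>
      u k * (vv k * (u (1 + k) * ww (1 + k))) +
      u k * (ww k * (u (1 + k) * vv (1 + k))) =
      v +
      (g * d (1 + k) +
       (f * (d (1 + k) * e (1 + k)) +
        (2::'a) * (d (1 + k) * (d (1 + k) * e (1 + k))))) \<and>
      - (u k * (ww k * u (1 + k))) =
      f * d (1 + k) +
      (d (1 + k) * d (1 + k) +
       (u k * (u (1 + k) * ww (1 + k)) +
        u k * (vv k * (u (1 + k) * vv (1 + k))))) \<and>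
      u k * (vv k * u (1 + k)) + u k * (u (1 + k) * vv (1 + k)) =
      d (1 + k) * e (1 + k) \<and>
      - (u k * u (1 + k)) = d (1 + k)"
      using iden_ii[of k] by (simp add: R_def cubicA_def power2_eq_square algebra_simps)
    have c0: "- (u k * u (1 + k)) = d (1 + k)" using B by blast
    have c: "u k * u (1+k) = - d (1+k)" using c0 by (metis minus_minus)
    have nz: "d (1+k) \<noteq> 0" using c u_nz by (metis mult_eq_0_iff neg_equal_0_iff_equal)
    from B have B1: "v * w =
      g * (d (1 + k) * e (1 + k)) +
      (u k * (ww k * (u (1 + k) * ww (1 + k))) +
       d (1 + k) * (d (1 + k) * (e (1 + k) * e (1 + k))))" 
      and B2: "u k * (vv k * (u (1 + k) * ww (1 + k))) +
      u k * (ww k * (u (1 + k) * vv (1 + k))) =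
      v +
      (g * d (1 + k) +
       (f * (d (1 + k) * e (1 + k)) +
        (2::'a) * (d (1 + k) * (d (1 + k) * e (1 + k)))))"
      and B3: "- (u k * (ww k * u (1 + k))) =
      f * d (1 + k) +
      (d (1 + k) * d (1 + k) +
       (u k * (u (1 + k) * ww (1 + k)) +
        u k * (vv k * (u (1 + k) * vv (1 + k)))))"
      and B4: "u k * (vv k * u (1 + k)) + u k * (u (1 + k) * vv (1 + k)) =
      d (1 + k) * e (1 + k)" by blast+
    have p: "u k * (x * (u (1 + k) * y)) = - d (1+k) * x * y" for x y
      using c by (metis mult.commute mult.left_commute mult.assoc)
    have p2: "u k * (x * u (1 + k)) = - d (1+k) * x" for x
      using c by (metis mult.commute mult.left_commute mult.assoc)
    have p3: "u k * (u (1 + k) * x) = - d (1+k) * x" for x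
      using c by (metis mult.assoc)
    note B1' = B1[unfolded p p2 p3] and B2' = B2[unfolded p p2 p3] and B3' = B3[unfolded p p2 p3]
      and B4' = B4[unfolded p p2 p3]
    show ?thesis using A B1' B2' B3' B4' nz unfolding add.commute[of k 1]
      by (simp add: algebra_simps)
  qed
  have sc: "e (k+1) = - vv k - vv (k+1)
     \<and> ww (k+1) = f + d (k+1) - ww k - vv k * vv (k+1)
     \<and> d k * d (k+1) * (e k + e (k+1) + vv k) = v
     \<and> d k * d (k+1) * (e k * e (k+1) - ww k) = - v * w
     \<and> e (k+1) * e (k+1) + e (k+1) * vv (k+1) + ww (k+1) = - d k" for k
  proof -
    from co[of k] have I0: "g + d k * e k + d (k+1) * e (k+1) = vv k * ww k"
      and I1: "f + d k + d (k+1) + vv k * vv k = ww k"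
      and C0: "v * w = g * (d (k+1) * e (k+1)) - d (k+1) * ww k * ww (k+1) + d (k+1) * d (k+1) * e (k+1) * e (k+1)"
      and C1: "- d (k+1) * (vv k * ww (k+1) + ww k * vv (k+1)) = v + g * d (k+1) + f * d (k+1) * e (k+1) + 2 * d (k+1) * d (k+1) * e (k+1)"
      and C2: "d (k+1) * ww k = f * d (k+1) + d (k+1) * d (k+1) - d (k+1) * ww (k+1) - d (k+1) * vv k * vv (k+1)"
      and C3: "- d (k+1) * (vv k + vv (k+1)) = d (k+1) * e (k+1)"
      and nz: "d (k+1) \<noteq> 0" by blast+
    have E3: "e (k+1) = - vv k - vv (k+1)"
    proof -
      have "d (k+1) * e (k+1) = d (k+1) * (- vv k - vv (k+1))"
        using C3 by (simp add: algebra_simps)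
      then show ?thesis using nz by simp
    qed
    have C2': "ww (k+1) = f + d (k+1) - ww k - vv k * vv (k+1)"
    proof -
      have "d (k+1) * ww (k+1) = d (k+1) * (f + d (k+1) - ww k - vv k * vv (k+1))"
        using C2 by (simp add: algebra_simps)
      then show ?thesis using nz by simp
    qed
    have vv1: "vv (k+1) = - e (k+1) - vv k" using E3 by simp
    have gg: "g = vv k * ww k - d k * e k - d (k+1) * e (k+1)" using I0 by (simp add: algebra_simps)
    have wk: "ww k = f + d k + d (k+1) + vv k * vv k" using I1 by simp
    have K1: "d k * d (k+1) * (e k + e (k+1) + vv k) = v"
    proof -
      have "- (vv k * ww (k+1) + ww k * vv (k+1)) - g - f * e (k+1) - 2 * d (k+1) * e (k+1)
            = d k * (e k + e (k+1) + vv k)"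
        unfolding C2' unfolding vv1 gg unfolding wk by algebra
      then have "d (k+1) * (d k * (e k + e (k+1) + vv k)) = v"
        using C1 by algebra
      then show ?thesis by (simp add: ac_simps)
    qed
    have K2: "d k * d (k+1) * (e k * e (k+1) - ww k) = - v * w"
    proof -
      have "g * e (k+1) - ww k * ww (k+1) + d (k+1) * e (k+1) * e (k+1)
            = - d k * (e k * e (k+1) - ww k)"
        unfolding C2' unfolding vv1 gg unfolding wk by algebra
      then have "d (k+1) * (- d k * (e k * e (k+1) - ww k)) = v * w"
        using C0 by algebra
      then show ?thesis by (metis (no_types, lifting) ac_simps minus_minus mult_minus_left)
    qed
    have Q: "e (k+1) * e (k+1) + e (k+1) * vv (k+1) + ww (k+1) = - d k"
      unfolding C2' unfolding vv1 unfolding wk by algebra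
    show ?thesis using E3 C2' K1 K2 Q by blast
  qed
  have dnz: "d j \<noteq> 0" for j using co[of "j-1"] by simp
  have T: "v * (w + e (k+1)) = - d k * d (k+1) * d (k+2)" for k
  proof -
    have kk: "k + 1 + 1 = k + 2" by simp
    from sc[of "k+1"] have K1: "d (k+1) * d (k+2) * (e (k+1) + e (k+2) + vv (k+1)) = v"
      and K2: "d (k+1) * d (k+2) * (e (k+1) * e (k+2) - ww (k+1)) = - v * w"
      unfolding kk by blast+
    from sc[of k] have Q: "e (k+1) * e (k+1) + e (k+1) * vv (k+1) + ww (k+1) = - d k" by blast
    note z = zero_diff[OF K1] zero_diff[OF K2] zero_diff[OF Q]
    show ?thesis
    proof (rule lc_aux)
      show "v * (w + e (k+1)) - - d k * d (k+1) * d (k+2) =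
        (d (k+1) * d (k+2) * (e (k+1) * e (k+2) - ww (k+1)) - - v * w)
        - e (k+1) * (d (k+1) * d (k+2) * (e (k+1) + e (k+2) + vv (k+1)) - v)
        + d (k+1) * d (k+2) * (e (k+1) * e (k+1) + e (k+1) * vv (k+1) + ww (k+1) - - d k)"
        by algebra
      show "(d (k+1) * d (k+2) * (e (k+1) * e (k+2) - ww (k+1)) - - v * w)
        - e (k+1) * (d (k+1) * d (k+2) * (e (k+1) + e (k+2) + vv (k+1)) - v)
        + d (k+1) * d (k+2) * (e (k+1) * e (k+1) + e (k+1) * vv (k+1) + ww (k+1) - - d k) = 0"
        by (simp only: z) simp
    qed
  qed
  have i1: "h - 2 + 1 = h - 1" "h - 2 + 2 = h" "h - 1 + 1 = h" "h - 1 + 2 = h + 1" "h + 2 = h + 1 + 1"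
    by simp_all
  have Tm: "v * (w + e (h-1)) = - d (h-2) * d (h-1) * d h" using T[of "h-2"] unfolding i1 .
  have T0: "v * (w + e h) = - d (h-1) * d h * d (h+1)" using T[of "h-1"] unfolding i1 .
  have Tp: "v * (w + e (h+1)) = - d h * d (h+1) * d (h+2)" using T[of h] .
  have Em: "e (h-1) = - vv (h-2) - vv (h-1)" using sc[of "h-2"] unfolding i1 by blast
  have E0: "e h = - vv (h-1) - vv h" using sc[of "h-1"] unfolding i1 by blast
  have Km: "d (h-1) * d h * (e (h-1) + e h + vv (h-1)) = v" using sc[of "h-1"] unfolding i1 by blast
  have K1: "d h * d (h+1) * (e h + e (h+1) + vv h) = v" using sc[of h] by blast
  have K2: "d h * d (h+1) * (e h * e (h+1) - ww h) = - v * w" using sc[of h] by blast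
  have I0: "g + d h * e h + d (h+1) * e (h+1) = vv h * ww h" using co[of h] by blast
  have I1: "f + d h + d (h+1) + vv h * vv h = ww h" using co[of h] by blast
  have QW: "w * w - vv h * w + ww h = (w + e h) * (w + e (h+1))"
  proof -
    have "d h * d (h+1) * ((w + e h) * (w + e (h+1)) - (w * w - vv h * w + ww h)) = 0"
    proof (rule lc_aux)
      show "d h * d (h+1) * ((w + e h) * (w + e (h+1)) - (w * w - vv h * w + ww h)) - 0
        = w * (d h * d (h+1) * (e h + e (h+1) + vv h) - v) + (d h * d (h+1) * (e h * e (h+1) - ww h) - - v * w)"
        by algebra
      show "w * (d h * d (h+1) * (e h + e (h+1) + vv h) - v) + (d h * d (h+1) * (e h * e (h+1) - ww h) - - v * w) = 0"
        by (simp only: zero_diff[OF K1] zero_diff[OF K2]) simp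
    qed
    then show ?thesis using dnz[of h] dnz[of "h+1"] by simp
  qed
  have IW: "w^3 + f * w + g + d h * (w + e h) + d (h+1) * (w + e (h+1)) = (w + vv h) * (w * w - vv h * w + ww h)"
  proof (rule lc_aux)
    show "w^3 + f * w + g + d h * (w + e h) + d (h+1) * (w + e (h+1)) - (w + vv h) * (w * w - vv h * w + ww h)
      = w * ((f + d h + d (h+1) + vv h * vv h) - ww h) + ((g + d h * e h + d (h+1) * e (h+1)) - vv h * ww h)"
      by algebra
    show "w * ((f + d h + d (h+1) + vv h * vv h) - ww h) + ((g + d h * e h + d (h+1) * e (h+1)) - vv h * ww h) = 0"
      by (simp only: zero_diff[OF I0] zero_diff[OF I1]) simp
  qed
  define S where "S = vv (h-2) + vv (h-1) + vv h"
  have SA: "(w + e h) * S = d (h+1)"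
  proof -
    have X: "d (h-1) * d h * S = - v"
    proof -
      have "d (h-1) * d h * (- vv (h-2) - vv (h-1) + (- vv (h-1) - vv h) + vv (h-1)) = v"
        using Km unfolding Em E0 .
      moreover have "d (h-1) * d h * (- vv (h-2) - vv (h-1) + (- vv (h-1) - vv h) + vv (h-1)) = - (d (h-1) * d h * S)"
        unfolding S_def by algebra
      ultimately show ?thesis by simp
    qed
    have "d (h-1) * d h * ((w + e h) * S - d (h+1)) = 0"
    proof (rule lc_aux)
      show "d (h-1) * d h * ((w + e h) * S - d (h+1)) - 0 =
        (w + e h) * (d (h-1) * d h * S - - v) - (v * (w + e h) - - d (h-1) * d h * d (h+1))"
        by algebra
      show "(w + e h) * (d (h-1) * d h * S - - v) - (v * (w + e h) - - d (h-1) * d h * d (h+1)) = 0"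
        by (simp only: zero_diff[OF X] zero_diff[OF T0]) simp
    qed
    then show ?thesis using dnz[of h] dnz[of "h-1"] by simp
  qed
  have PW: "w^3 + f * w + g + d h * (w + e h) = (w + e (h-1)) * (w + e h) * (w + e (h+1))"
  proof (rule lc_aux)
    show "w^3 + f * w + g + d h * (w + e h) - (w + e (h-1)) * (w + e h) * (w + e (h+1))
      = (w^3 + f * w + g + d h * (w + e h) + d (h+1) * (w + e (h+1)) - (w + vv h) * (w * w - vv h * w + ww h))
      + (w + vv h) * ((w * w - vv h * w + ww h) - (w + e h) * (w + e (h+1)))
      + (w + e (h+1)) * ((w + e h) * S - d (h+1))
      - (w + e h) * (w + e (h+1)) * (e (h-1) - (- vv (h-2) - vv (h-1)))"
      unfolding S_def by algebra
    show "(w^3 + f * w + g + d h * (w + e h) + d (h+1) * (w + e (h+1)) - (w + vv h) * (w * w - vv h * w + ww h))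
      + (w + vv h) * ((w * w - vv h * w + ww h) - (w + e h) * (w + e (h+1)))
      + (w + e (h+1)) * ((w + e h) * S - d (h+1))
      - (w + e h) * (w + e (h+1)) * (e (h-1) - (- vv (h-2) - vv (h-1))) = 0"
      by (simp only: zero_diff[OF IW] zero_diff[OF QW] zero_diff[OF SA] zero_diff[OF Em]) simp
  qed
  show ?thesis
  proof
    have L: "d (h-2) * (d (h-1))\<^sup>2 * (d h)^3 * (d (h+1))\<^sup>2 * d (h+2)
        = - (v^3) * ((w + e (h-1)) * (w + e h) * (w + e (h+1)))"
    proof (rule lc_aux)
      show "d (h-2) * (d (h-1))\<^sup>2 * (d h)^3 * (d (h+1))\<^sup>2 * d (h+2)
        - - (v^3) * ((w + e (h-1)) * (w + e h) * (w + e (h+1)))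
        = (v * (w + e (h-1)) - - d (h-2) * d (h-1) * d h) * (v * (w + e h)) * (v * (w + e (h+1)))
        - (d (h-2) * d (h-1) * d h) * (v * (w + e h) - - d (h-1) * d h * d (h+1)) * (v * (w + e (h+1)))
        + (d (h-2) * d (h-1) * d h) * (d (h-1) * d h * d (h+1)) * (v * (w + e (h+1)) - - d h * d (h+1) * d (h+2))"
        by algebra
      show "(v * (w + e (h-1)) - - d (h-2) * d (h-1) * d h) * (v * (w + e h)) * (v * (w + e (h+1)))
        - (d (h-2) * d (h-1) * d h) * (v * (w + e h) - - d (h-1) * d h * d (h+1)) * (v * (w + e (h+1)))
        + (d (h-2) * d (h-1) * d h) * (d (h-1) * d h * d (h+1)) * (v * (w + e (h+1)) - - d h * d (h+1) * d (h+2)) = 0"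
        by (simp only: zero_diff[OF Tm] zero_diff[OF T0] zero_diff[OF Tp]) simp
    qed
    have M: "- (v^3) * ((g + d h * e h) + w * (f + d h) + w^3) = - (v^3) * (w^3 + f * w + g + d h * (w + e h))"
      by algebra
    show "d (h-2) * (d (h-1))\<^sup>2 * (d h)^3 * (d (h+1))\<^sup>2 * d (h+2)
           = - (v^3) * ((g + d h * e h) + w * (f + d h) + w^3)"
      unfolding L M PW ..
    show "- (v^3) * ((g + d h * e h) + w * (f + d h) + w^3)
           = v\<^sup>2 * d (h-1) * (d h)\<^sup>2 * d (h+1) - v^3 * (g + w * f + w^3)"
    proof (rule lc_aux)
      show "- (v^3) * ((g + d h * e h) + w * (f + d h) + w^3)
           - (v\<^sup>2 * d (h-1) * (d h)\<^sup>2 * d (h+1) - v^3 * (g + w * f + w^3))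
           = - (v\<^sup>2 * d h) * (v * (w + e h) - - d (h-1) * d h * d (h+1))"
        by algebra
      show "- (v\<^sup>2 * d h) * (v * (w + e h) - - d (h-1) * d h * d (h+1)) = 0"
        by (simp only: zero_diff[OF T0]) simp
    qed
  qed
qed

end
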